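(* For any $\alpha>0$, $\nu>-1$ and $x>0$, $$0<\frac{L_{\nu+1}^{\alpha-1}(-x)}{L_{\nu}^{\alpha}(-x)}<\frac{\alpha+x+\sqrt{(\alpha+x)^2+4(\nu+1)x}}{2(\nu+1)} .$$
   Context: $L_\nu^\alpha$ denotes the Laguerre function $L_\nu^\alpha(x)=\dfrac{\Gamma(\nu+\alpha+1)}{\Gamma(\nu+1)\Gamma(\alpha+1)}\,{}_1F_1(-\nu;\alpha+1;x)$, which reduces to the generalized Laguerre polynomial when $\nu$ is a nonnegative integer. *)

theory Defs
  imports "HOL-Analysis.Analysis"
begin

definition hyp1F1 :: "real \<Rightarrow> real \<Rightarrow> real \<Rightarrow> real" where
  "hyp1F1 a b x = (\<Sum>k. pochhammer a k / pochhammer b k * x ^ k / fact k)"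

definition laguerreL :: "real \<Rightarrow> real \<Rightarrow> real \<Rightarrow> real" where
  "laguerreL \<nu> \<alpha> x =
     Gamma (\<nu> + \<alpha> + 1) / (Gamma (\<nu> + 1) * Gamma (\<alpha> + 1)) * hyp1F1 (- \<nu>) (\<alpha> + 1) x"

end

theory Submission imports Defs begin

definition hterm :: "real \<Rightarrow> real \<Rightarrow> real \<Rightarrow> nat \<Rightarrow> real" where
  "hterm a b x k = pochhammer a k / pochhammer b k * x ^ k / fact k"

lemma hterm_Suc:
  assumes "b > 0"
  shows "hterm a b x (Suc k) = hterm a b x k * ((a + k) / (b + k) * x / (k + 1))"
proof -
  have "pochhammer b k > 0" using assms by (simp add: pochhammer_pos)
  moreover have "b + k > 0" using assms by simp
  ultimately show ?thesis
    unfolding hterm_def by (simp add: pochhammer_Suc fact_Suc field_simps)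
qed

lemma hterm_0[simp]: "hterm a b x 0 = 1" by (simp add: hterm_def)

lemma summable_hterm_poly:
  assumes b: "b > 0"
  shows "summable (\<lambda>k. (real k + 1)^2 * norm (hterm a b x k))"
proof (rule summable_ratio_test[where c="1/2" and N="nat \<lceil>8 * (\<bar>a\<bar>/b + 1) * \<bar>x\<bar>\<rceil>"])
  fix n assume n: "n \<ge> nat \<lceil>8 * (\<bar>a\<bar>/b + 1) * \<bar>x\<bar>\<rceil>"
  define K where "K = \<bar>a\<bar>/b + 1"
  have K: "K \<ge> 1" using b by (simp add: K_def)
  have nK: "8 * K * \<bar>x\<bar> \<le> real n + 1" using n unfolding K_def by linarith
  have bn: "b + n > 0" using b by simp
  have a1: "\<bar>a + n\<bar> \<le> K * (b + n)"
  proof -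
    have "\<bar>a + n\<bar> \<le> \<bar>a\<bar> + n" by simp
    also have "\<bar>a\<bar> \<le> \<bar>a\<bar>/b * (b + n)" using b by (simp add: field_simps)
    hence "\<bar>a\<bar> + n \<le> \<bar>a\<bar>/b * (b+n) + 1 * (b + n)" using b by simp
    finally show ?thesis by (simp add: K_def algebra_simps)
  qed
  have r: "\<bar>(a + n) / (b + n) * x / (n + 1)\<bar> \<le> K * \<bar>x\<bar> / (n+1)"
  proof -
    have "\<bar>(a + n) / (b + n) * x / (n + 1)\<bar> = \<bar>a + n\<bar> / (b + n) * \<bar>x\<bar> / (n+1)"
      using bn by (simp add: abs_mult abs_divide)
    also have "\<bar>a + n\<bar> / (b + n) \<le> K" using a1 bn by (simp add: divide_le_eq)
    hence "\<bar>a + n\<bar> / (b + n) * \<bar>x\<bar> / (n+1) \<le> K * \<bar>x\<bar> / (n+1)"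
      by (intro divide_right_mono mult_right_mono) auto
    finally show ?thesis .
  qed
  have h: "norm (hterm a b x (Suc n)) \<le> norm (hterm a b x n) * (K * \<bar>x\<bar> / (n+1))"
  proof -
    have "norm (hterm a b x (Suc n)) = norm (hterm a b x n) * \<bar>(a + n) / (b + n) * x / (n + 1)\<bar>"
      by (simp add: hterm_Suc[OF b] abs_mult)
    also have "\<dots> \<le> norm (hterm a b x n) * (K * \<bar>x\<bar> / (n+1))"
      by (rule mult_left_mono[OF r]) simp
    finally show ?thesis .
  qed
  have sq: "(real (Suc n) + 1)^2 \<le> 4 * (real n + 1)^2" by (simp add: power2_eq_square algebra_simps)
  have "norm ((real (Suc n) + 1)^2 * norm (hterm a b x (Suc n)))
      = (real (Suc n) + 1)^2 * norm (hterm a b x (Suc n))" by simp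
  also have "\<dots> \<le> (4 * (real n + 1)^2) * (norm (hterm a b x n) * (K * \<bar>x\<bar> / (n+1)))"
    by (rule mult_mono[OF sq h]) auto
  also have "\<dots> = norm (hterm a b x n) * (real n + 1) * (4 * K * \<bar>x\<bar>)"
    by (simp add: power2_eq_square field_simps)
  also have "\<dots> \<le> norm (hterm a b x n) * (real n + 1) * ((real n + 1) / 2)"
    by (rule mult_left_mono) (use nK in auto)
  also have "\<dots> = 1/2 * norm ((real n + 1)^2 * norm (hterm a b x n))"
    by (simp add: power2_eq_square)
  finally show "norm ((real (Suc n) + 1)^2 * norm (hterm a b x (Suc n))) \<le> 1/2 * norm ((real n + 1)^2 * norm (hterm a b x n))" .
qed simp

lemma summable_hterm_all:
  assumes b: "b > 0"
  shows "summable (\<lambda>k. norm (hterm a b x k))" "summable (hterm a b x)"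
    "summable (\<lambda>k. real k * hterm a b x k)" "summable (\<lambda>k. (real k)^2 * hterm a b x k)"
proof -
  note S = summable_hterm_poly[OF b, of a x]
  have le1: "1 \<le> (real k + 1)^2" for k using one_le_power[of "real k + 1" 2] by simp
  have le2: "real k \<le> (real k + 1)^2" for k by (simp add: power2_eq_square algebra_simps)
  have le3: "(real k)^2 \<le> (real k + 1)^2" for k by (simp add: power_mono)
  show 1: "summable (\<lambda>k. norm (hterm a b x k))"
    by (rule summable_comparison_test'[OF S, of 0]) (use mult_right_mono[OF le1] in auto)
  show "summable (hterm a b x)" using 1 summable_norm_cancel by blast
  show "summable (\<lambda>k. real k * hterm a b x k)"
    by (rule summable_comparison_test'[OF S, of 0]) (auto simp: abs_mult intro: mult_right_mono le2)
  show "summable (\<lambda>k. (real k)^2 * hterm a b x k)"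
    by (rule summable_comparison_test'[OF S, of 0]) (auto simp: abs_mult intro: mult_right_mono le3)
qed

definition Fsum :: "real \<Rightarrow> real \<Rightarrow> nat \<Rightarrow> real" where
  "Fsum a b n = (\<Sum>k\<le>n. real (n choose k) * ((-1)^k * pochhammer a k / pochhammer b k))"

lemma Fsum_Suc:
  "Fsum a b (Suc n) = Fsum a b n - a / b * Fsum (a+1) (b+1) n"
proof -
  define t where "t = (\<lambda>k. (-1::real)^k * pochhammer a k / pochhammer b k)"
  have t_Suc: "t (Suc i) = - (a / b) * ((-1)^i * pochhammer (a+1) i / pochhammer (b+1) i)" for i
    by (simp add: t_def pochhammer_rec field_simps)
  have "Fsum a b (Suc n) = (\<Sum>k\<le>Suc n. real (Suc n choose k) * t k)"
    by (simp add: Fsum_def t_def)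
  also have "\<dots> = t 0 + (\<Sum>i\<le>n. real (Suc n choose Suc i) * t (Suc i))"
    by (subst sum.atMost_Suc_shift) simp
  also have "\<dots> = (t 0 + (\<Sum>i\<le>n. real (n choose Suc i) * t (Suc i))) + (\<Sum>i\<le>n. real (n choose i) * t (Suc i))"
    by (simp add: sum.distrib algebra_simps)
  also have "t 0 + (\<Sum>i\<le>n. real (n choose Suc i) * t (Suc i)) = (\<Sum>k\<le>Suc n. real (n choose k) * t k)"
    by (subst sum.atMost_Suc_shift) simp
  also have "\<dots> = Fsum a b n" by (simp add: Fsum_def t_def)
  also have "(\<Sum>i\<le>n. real (n choose i) * t (Suc i)) = - (a/b) * Fsum (a+1) (b+1) n"
    by (simp add: t_Suc Fsum_def sum_distrib_left algebra_simps)
  finally show ?thesis by simp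
qed

lemma Fsum_eq:
  assumes "b > 0"
  shows "Fsum a b n = pochhammer (b - a) n / pochhammer b n"
  using assms
proof (induction n arbitrary: a b)
  case 0
  then show ?case by (simp add: Fsum_def)
next
  case (Suc n)
  have b: "b > 0" by fact
  have pb: "pochhammer b n > 0" "pochhammer (b+1) n > 0" using b by (auto simp: pochhammer_pos)
  have "Fsum a b (Suc n) = pochhammer (b - a) n / pochhammer b n - a / b * (pochhammer (b - a) n / pochhammer (b+1) n)"
    using Suc.IH[of b a] Suc.IH[of "b+1" "a+1"] b by (simp add: Fsum_Suc)
  also have "\<dots> = pochhammer (b - a) (Suc n) / pochhammer b (Suc n)"
  proof -
    have e1: "pochhammer b (Suc n) = pochhammer b n * (b + n)" by (simp add: pochhammer_Suc)
    have e2: "pochhammer b (Suc n) = b * pochhammer (b+1) n" by (simp add: pochhammer_rec)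
    have e3: "pochhammer (b-a) (Suc n) = pochhammer (b-a) n * (b - a + n)" by (simp add: pochhammer_Suc)
    have "b + n > 0" using b by simp
    have e4: "pochhammer (b+1) n = pochhammer b n * (b + n) / b" using e1 e2 b by (simp add: field_simps)
    have aux: "B \<noteq> 0 \<Longrightarrow> b \<noteq> 0 \<Longrightarrow> c \<noteq> 0 \<Longrightarrow> P/B - a/b*(P/(B*c/b)) = P*(c-a)/(B*c)" for P B c :: real
      by (simp add: field_simps)
    show ?thesis using pb b \<open>b + n > 0\<close> unfolding e3 e1 e4
      by (subst aux) (auto simp: algebra_simps)
  qed
  finally show ?case .
qed

lemma hyp1F1_hterm: "hyp1F1 a b x = (\<Sum>k. hterm a b x k)"
  by (simp add: hyp1F1_def hterm_def)

lemma t1: "exp (x::real) = (\<Sum>n. x^n / fact n)"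
    by (simp add: exp_def divide_inverse mult.commute)
lemma t2: "summable (\<lambda>n. norm ((x::real)^n / fact n))"
    using summable_norm_exp[of x] by (simp add: divide_inverse mult.commute)
lemma t3: "i \<le> k \<Longrightarrow> (-x)^i * x^(k-i) = (-1)^i * (x::real)^k"
proof -
  assume ik: "i \<le> k"
  have "x^i * x^(k-i) = x^k" using ik by (simp add: power_add[symmetric])
  moreover have "(-x)^i = (-1)^i * x^i" by (rule power_minus)
  ultimately show ?thesis by (simp add: mult.assoc)
qed

lemma kummer:
  assumes b: "b > 0"
  shows "hyp1F1 a b x = exp x * hyp1F1 (b - a) b (- x)"
proof -
  define e where "e = (\<lambda>n. x^n / fact n)"
  have ex: "exp x = (\<Sum>n. e n)" unfolding e_def by (rule t1)
  have se: "summable (\<lambda>n. norm (e n))" unfolding e_def by (rule t2)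
  have inner: "(\<Sum>i\<le>k. hterm (b-a) b (-x) i * e (k - i)) = hterm a b x k" for k
  proof -
    have "(\<Sum>i\<le>k. hterm (b-a) b (-x) i * e (k - i))
        = (\<Sum>i\<le>k. x^k / fact k * (real (k choose i) * ((-1)^i * pochhammer (b-a) i / pochhammer b i)))"
    proof (rule sum.cong[OF refl])
      fix i assume "i \<in> {..k}"
      hence ik: "i \<le> k" by simp
      have "hterm (b-a) b (-x) i * e (k - i)
          = pochhammer (b-a) i / pochhammer b i * ((-x)^i * x^(k-i)) / (fact i * fact (k-i))"
        unfolding hterm_def e_def by simp
      also have "\<dots> = pochhammer (b-a) i / pochhammer b i * ((-1)^i * x^k) * (real (k choose i) / fact k)"
        unfolding t3[OF ik] binomial_fact[OF ik] by (simp add: field_simps)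
      finally show "hterm (b-a) b (-x) i * e (k - i) = x^k / fact k * (real (k choose i) * ((-1)^i * pochhammer (b-a) i / pochhammer b i))"
        by (simp add: mult_ac)
    qed
    also have "\<dots> = x^k / fact k * Fsum (b-a) b k"
      unfolding Fsum_def sum_distrib_left ..
    also have "\<dots> = hterm a b x k"
      using b unfolding Fsum_eq[OF b] hterm_def by (simp add: mult_ac)
    finally show ?thesis .
  qed
  have "exp x * hyp1F1 (b - a) b (- x) = (\<Sum>k. hterm (b-a) b (-x) k) * (\<Sum>n. e n)"
    unfolding ex hyp1F1_hterm by (rule mult.commute)
  also have "\<dots> = (\<Sum>k. \<Sum>i\<le>k. hterm (b-a) b (-x) i * e (k - i))"
    by (rule Cauchy_product[OF summable_hterm_all(1)[OF b] se])
  also have "\<dots> = hyp1F1 a b x" unfolding inner hyp1F1_hterm ..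
  finally show ?thesis by simp
qed


lemma Gamma_plus1_pos: "(z::real) > 0 \<Longrightarrow> Gamma (z + 1) = z * Gamma z"
  by (rule Gamma_plus1) (auto dest: nonpos_Ints_nonpos)

lemma hterm_pos: "b > 0 \<Longrightarrow> a > 0 \<Longrightarrow> x > 0 \<Longrightarrow> hterm a b x k > 0"
  by (simp add: hterm_def pochhammer_pos)

lemma lin2:
  fixes f g :: "nat \<Rightarrow> real"
  assumes "summable f" "summable g"
  shows "(\<Sum>k. f k + c * g k) = suminf f + c * suminf g"
proof -
  have "summable (\<lambda>k. c * g k)" using assms(2) by (rule summable_mult)
  from suminf_add[OF assms(1) this] suminf_mult[OF assms(2), of c] show ?thesis by simp
qed

lemma lin3:
  fixes f g h :: "nat \<Rightarrow> real"
  assumes "summable f" "summable g" "summable h"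
  shows "(\<Sum>k. f k - a * g k + b * h k) = suminf f - a * suminf g + b * suminf h"
proof -
  have s1: "summable (\<lambda>k. a * g k)" using assms(2) by (rule summable_mult)
  have s2: "summable (\<lambda>k. b * h k)" using assms(3) by (rule summable_mult)
  have s3: "summable (\<lambda>k. f k - a * g k)" using assms(1) s1 by (rule summable_diff)
  have "(\<Sum>k. f k - a * g k + b * h k) = (\<Sum>k. f k - a * g k) + (\<Sum>k. b * h k)"
    using suminf_add[OF s3 s2] by simp
  also have "(\<Sum>k. f k - a * g k) = suminf f - (\<Sum>k. a * g k)" using suminf_diff[OF assms(1) s1] by simp
  finally show ?thesis using suminf_mult[OF assms(2), of a] suminf_mult[OF assms(3), of b] by simp
qed

lemma main_ineq:
  fixes \<alpha> c x :: real
  assumes a: "\<alpha> > 0" and c: "c > 0" and x: "x > 0"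
  defines "w \<equiv> hterm c (\<alpha> + 1) x"
  defines "Q \<equiv> (\<Sum>k. w k)" and "R \<equiv> (\<Sum>k. real k * w k)" and "T \<equiv> (\<Sum>k. (real k)^2 * w k)"
  shows "Q > 0" "R \<ge> 0" "T + \<alpha> * R = x * (R + c * Q)" "R^2 < Q * T"
    "\<alpha> * hyp1F1 c \<alpha> x = \<alpha> * Q + R"
proof -
  have b: "\<alpha> + 1 > 0" using a by simp
  have wpos: "w k > 0" for k unfolding w_def using hterm_pos[OF b c x] .
  note sm = summable_hterm_all[OF b, of c x, folded w_def]
  show Qp: "Q > 0" unfolding Q_def by (rule suminf_pos[OF sm(2) wpos])
  show "R \<ge> 0" unfolding R_def by (rule suminf_nonneg[OF sm(3)]) (use wpos in \<open>simp add: less_imp_le\<close>)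
  show "T + \<alpha> * R = x * (R + c * Q)"
  proof -
    define f where "f = (\<lambda>k. (real k)^2 * w k + \<alpha> * (real k * w k))"
    have sf: "summable f" unfolding f_def using sm(3,4) by (intro summable_add summable_mult)
    have fS: "f (Suc k) = x * (real k * w k + c * w k)" for k
    proof -
      have wS: "w (Suc k) = w k * ((c + k) / (\<alpha> + 1 + k) * x / (k + 1))"
        unfolding w_def by (rule hterm_Suc[OF b])
      have A: "\<alpha> + 1 + k \<noteq> 0" using a by simp
      have B: "real k + 1 \<noteq> 0" by simp
      have aux: "A \<noteq> 0 \<Longrightarrow> B \<noteq> 0 \<Longrightarrow> B*A*(W*(C/A*X/B)) = X*C*W" for A B C W X :: real
        by simp
      have "f (Suc k) = (real k + 1) * (\<alpha> + 1 + k) * w (Suc k)"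
        by (simp add: f_def power2_eq_square algebra_simps)
      also have "\<dots> = x * (c + k) * w k" unfolding wS using aux[OF A B, of "w k" "c + k" x] by (simp add: add.commute)
      finally show ?thesis by (simp add: algebra_simps)
    qed
    have "T + \<alpha> * R = suminf f"
      unfolding f_def T_def R_def using lin2[OF sm(4) sm(3)] by simp
    also have "\<dots> = (\<Sum>k. f (Suc k))" using suminf_split_head[OF sf] by (simp add: f_def)
    also have "\<dots> = (\<Sum>k. x * (real k * w k + c * w k))" by (simp add: fS)
    also have "\<dots> = x * (R + c * Q)"
    proof -
      have "summable (\<lambda>k. real k * w k + c * w k)" using sm(2,3) by (intro summable_add summable_mult)
      from suminf_mult[OF this, of x] lin2[OF sm(3) sm(2), of c]
      show ?thesis unfolding R_def Q_def by (simp add: algebra_simps)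
    qed
    finally show ?thesis .
  qed
  show "R^2 < Q * T"
  proof -
    define \<mu> where "\<mu> = R / Q"
    define g where "g = (\<lambda>k. w k * (real k - \<mu>)^2)"
    have g_eq: "g = (\<lambda>k. (real k)^2 * w k - 2 * \<mu> * (real k * w k) + \<mu>^2 * w k)"
      unfolding g_def by (auto simp: power2_eq_square algebra_simps)
    have sg: "summable g" unfolding g_eq using sm(2,3,4)
      by (intro summable_add summable_diff summable_mult) auto
    have "suminf g = T - 2 * \<mu> * R + \<mu>^2 * Q"
      unfolding g_eq T_def R_def Q_def using lin3[OF sm(4) sm(3) sm(2), of "2*\<mu>" "\<mu>^2"] by simp
    also have "\<dots> = T - R^2 / Q" using Qp by (simp add: \<mu>_def power2_eq_square field_simps)
    finally have gs: "suminf g = T - R^2 / Q" .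
    have "sum g {0, 1} \<le> suminf g"
      by (rule sum_le_suminf[OF sg]) (use wpos in \<open>auto simp: g_def less_imp_le\<close>)
    moreover have "sum g {0,1} > 0"
    proof -
      have "sum g {0,1} = w 0 * \<mu>^2 + w 1 * (1 - \<mu>)^2" by (simp add: g_def power2_eq_square)
      moreover have "w 0 * \<mu>^2 + w 1 * (1 - \<mu>)^2 > 0"
      proof (cases "\<mu> = 0")
        case True then show ?thesis using wpos[of 1] by simp
      next
        case False then show ?thesis using wpos[of 0] wpos[of 1]
          by (intro add_pos_nonneg) auto
      qed
      ultimately show ?thesis by simp
    qed
    ultimately have "T - R^2 / Q > 0" using gs by simp
    then show ?thesis using Qp by (simp add: field_simps)
  qed
  show "\<alpha> * hyp1F1 c \<alpha> x = \<alpha> * Q + R"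
  proof -
    have tm: "\<alpha> * hterm c \<alpha> x k = \<alpha> * w k + real k * w k" for k
    proof -
      have e1: "pochhammer \<alpha> (Suc k) = pochhammer \<alpha> k * (\<alpha> + k)" by (simp add: pochhammer_Suc)
      have e2: "pochhammer \<alpha> (Suc k) = \<alpha> * pochhammer (\<alpha>+1) k" by (simp add: pochhammer_rec)
      have p1: "pochhammer \<alpha> k > 0" "pochhammer (\<alpha>+1) k > 0" using a by (auto simp: pochhammer_pos)
      have e3: "\<alpha> / pochhammer \<alpha> k = (\<alpha> + k) / pochhammer (\<alpha>+1) k"
        using e1 e2 p1 a by (simp add: field_simps)
      have "\<alpha> * hterm c \<alpha> x k = \<alpha> / pochhammer \<alpha> k * (pochhammer c k * x ^ k / fact k)"
        by (simp add: hterm_def)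
      also have "\<dots> = (\<alpha> + k) / pochhammer (\<alpha>+1) k * (pochhammer c k * x ^ k / fact k)"
        by (simp only: e3)
      also have "\<dots> = \<alpha> * w k + real k * w k"
        by (simp add: w_def hterm_def field_simps add_divide_distrib)
      finally show ?thesis .
    qed
    have "\<alpha> * hyp1F1 c \<alpha> x = (\<Sum>k. \<alpha> * hterm c \<alpha> x k)"
      unfolding hyp1F1_hterm
      by (rule suminf_mult[symmetric]) (rule summable_hterm_all(2), use a in simp)
    also have "\<dots> = (\<Sum>k. \<alpha> * w k + real k * w k)" by (simp only: tm)
    also have "\<dots> = \<alpha> * Q + R" unfolding Q_def R_def using lin2[OF sm(3) sm(2), of \<alpha>]
      by (simp add: algebra_simps)
    finally show ?thesis .
  qed
qed


theorem theorem18: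
  fixes \<alpha> \<nu> x :: real
  assumes "\<alpha> > 0" and "\<nu> > -1" and "x > 0"
  shows "0 < laguerreL (\<nu> + 1) (\<alpha> - 1) (- x) / laguerreL \<nu> \<alpha> (- x)
       \<and> laguerreL (\<nu> + 1) (\<alpha> - 1) (- x) / laguerreL \<nu> \<alpha> (- x)
         < (\<alpha> + x + sqrt ((\<alpha> + x)^2 + 4 * (\<nu> + 1) * x)) / (2 * (\<nu> + 1))"
proof -
  have a: "\<alpha> > 0" and n1: "\<nu> + 1 > 0" and x: "x > 0" using assms by auto
  define c where "c = \<alpha> + \<nu> + 1"
  have c: "c > 0" using a n1 by (simp add: c_def)
  define w where "w = hterm c (\<alpha> + 1) x"
  define Q where "Q = (\<Sum>k. w k)"
  define R where "R = (\<Sum>k. real k * w k)"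
  define T where "T = (\<Sum>k. (real k)^2 * w k)"
  note M = main_ineq[OF a c x, folded w_def, folded Q_def R_def T_def]
  define P where "P = hyp1F1 c \<alpha> x"
  have Qp: "Q > 0" by (rule M(1))
  have Rn: "R \<ge> 0" by (rule M(2))
  have PQ: "\<alpha> * P = \<alpha> * Q + R" unfolding P_def by (rule M(5))
  have e: "exp (-x) > 0" by simp
  have gc: "Gamma c > 0" "Gamma (\<nu>+1) > 0" "Gamma \<alpha> > 0" using c n1 a by auto
  have A: "laguerreL (\<nu> + 1) (\<alpha> - 1) (- x) = Gamma c / ((\<nu> + 1) * Gamma (\<nu> + 1) * Gamma \<alpha>) * (exp (-x) * P)"
  proof -
    have k: "hyp1F1 (- (\<nu> + 1)) \<alpha> (- x) = exp (-x) * P"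
      unfolding P_def using kummer[OF a, of "- (\<nu> + 1)" "-x"] by (simp add: c_def algebra_simps)
    have g: "Gamma (\<nu> + 1 + 1) = (\<nu> + 1) * Gamma (\<nu> + 1)" by (rule Gamma_plus1_pos[OF n1])
    have "laguerreL (\<nu> + 1) (\<alpha> - 1) (- x) = Gamma c / (Gamma (\<nu> + 1 + 1) * Gamma \<alpha>) * hyp1F1 (- (\<nu> + 1)) \<alpha> (- x)"
      unfolding laguerreL_def c_def by (simp add: algebra_simps)
    then show ?thesis using k g by simp
  qed
  have B: "laguerreL \<nu> \<alpha> (- x) = Gamma c / (Gamma (\<nu> + 1) * (\<alpha> * Gamma \<alpha>)) * (exp (-x) * Q)"
  proof -
    have b1: "\<alpha> + 1 > 0" using a by simp
    have k: "hyp1F1 (- \<nu>) (\<alpha> + 1) (- x) = exp (-x) * Q"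
      unfolding Q_def w_def using kummer[OF b1, of "- \<nu>" "-x"] by (simp add: c_def algebra_simps hyp1F1_hterm)
    have g: "Gamma (\<alpha> + 1) = \<alpha> * Gamma \<alpha>" by (rule Gamma_plus1_pos[OF a])
    have "laguerreL \<nu> \<alpha> (- x) = Gamma c / (Gamma (\<nu> + 1) * Gamma (\<alpha> + 1)) * hyp1F1 (- \<nu>) (\<alpha> + 1) (- x)"
      unfolding laguerreL_def c_def by (simp add: algebra_simps)
    then show ?thesis using k g by simp
  qed
  define s where "s = R / Q"
  have s0: "s \<ge> 0" using Rn Qp by (simp add: s_def)
  have ratio: "laguerreL (\<nu> + 1) (\<alpha> - 1) (- x) / laguerreL \<nu> \<alpha> (- x) = (\<alpha> + s) / (\<nu> + 1)"
  proof -
    have "laguerreL (\<nu> + 1) (\<alpha> - 1) (- x) / laguerreL \<nu> \<alpha> (- x) = \<alpha> * P / ((\<nu> + 1) * Q)"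
    proof -
      have aux: "G\<noteq>0 \<Longrightarrow> g\<noteq>0 \<Longrightarrow> aa\<noteq>0 \<Longrightarrow> n\<noteq>0 \<Longrightarrow> ee\<noteq>0 \<Longrightarrow> QQ\<noteq>0 \<Longrightarrow> al\<noteq>0 \<Longrightarrow>
        G/(n*g*aa)*(ee*PP) / (G/(g*(al*aa))*(ee*QQ)) = al*PP/(n*QQ)" for G g aa n ee QQ al PP :: real
        by (simp add: field_simps)
      have z: "Gamma c \<noteq> 0" "Gamma (\<nu>+1) \<noteq> 0" "Gamma \<alpha> \<noteq> 0" "\<nu> + 1 \<noteq> 0" "exp (-x) \<noteq> 0" "Q \<noteq> 0" "\<alpha> \<noteq> 0"
        using gc e Qp a n1 by (auto simp del: Gamma_real_pos)
      show ?thesis unfolding A B by (rule aux[OF z])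
    qed
    also have "\<dots> = (\<alpha> + s) / (\<nu> + 1)" unfolding PQ s_def using Qp by (simp add: field_simps)
    finally show ?thesis .
  qed
  have key: "s^2 + (\<alpha> - x) * s < c * x"
  proof -
    have "s^2 + (\<alpha> - x) * s - c * x = (R^2 + \<alpha> * R * Q - Q * (x * (R + c * Q))) / Q^2"
      using Qp by (simp add: s_def field_simps power2_eq_square)
    also have "\<dots> = (R^2 - Q * T) / Q^2"
    proof -
      have "Q * (x * (R + c * Q)) = Q * (T + \<alpha> * R)" by (simp only: M(3))
      then show ?thesis by (simp add: algebra_simps)
    qed
    also have "\<dots> < 0" using M(4) Qp by (simp add: divide_neg_pos)
    finally show ?thesis by simp
  qed
  define D where "D = (\<alpha> + x)^2 + 4 * (\<nu> + 1) * x"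
  have Dge: "D - (\<alpha> + 2 * s - x)^2 = 4 * (c * x - (s^2 + (\<alpha> - x) * s))"
    by (simp add: D_def c_def power2_eq_square algebra_simps)
  have lt: "\<alpha> + 2 * s - x < sqrt D"
  proof (cases "\<alpha> + 2 * s - x < 0")
    case True
    have "D \<ge> 0" using x n1 by (simp add: D_def)
    then show ?thesis using True by (meson less_le_trans real_sqrt_ge_zero)
  next
    case False
    have "(\<alpha> + 2 * s - x)^2 < D" using Dge key by simp
    then show ?thesis by (rule real_less_rsqrt)
  qed
  show ?thesis
  proof
    show "0 < laguerreL (\<nu> + 1) (\<alpha> - 1) (- x) / laguerreL \<nu> \<alpha> (- x)"
      unfolding ratio using a s0 n1 by simp
    have "(\<alpha> + s) / (\<nu> + 1) < (\<alpha> + x + sqrt D) / (2 * (\<nu> + 1))"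
    proof -
      have "2*(\<alpha>+s) < \<alpha> + x + sqrt D" using lt by simp
      hence "2*(\<alpha>+s)/(2*(\<nu>+1)) < (\<alpha>+x+sqrt D)/(2*(\<nu>+1))"
        by (rule divide_strict_right_mono) (use n1 in simp)
      moreover have "2*(\<alpha>+s)/(2*(\<nu>+1)) = (\<alpha> + s) / (\<nu> + 1)"
        by (rule mult_divide_mult_cancel_left) simp
      ultimately show ?thesis by simp
    qed
    then show "laguerreL (\<nu> + 1) (\<alpha> - 1) (- x) / laguerreL \<nu> \<alpha> (- x)
         < (\<alpha> + x + sqrt ((\<alpha> + x)^2 + 4 * (\<nu> + 1) * x)) / (2 * (\<nu> + 1))"
      unfolding ratio D_def .
  qed
qed

end
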